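(* If a non-failed Boolean CSP is limited and hyper-arc consistent, then it is closed under the applications of (each of) the rules of the proof system BOOL'.
   Context: A Boolean CSP is $\langle \mathcal C; x_1\in D_1,\dots,x_n\in D_n\rangle$ with $D_i\subseteq\{0,1\}$ and $\mathcal C$ a finite set of Boolean constraints, each of the forms $u=v$ ($\{(0,0),(1,1)\}$), $\neg u=v$ ($\{(0,1),(1,0)\}$), $u\wedge v=w$ ($\{(0,0,0),(0,1,0),(1,0,0),(1,1,1)\}$), $u\vee v=w$ ($\{(0,0,0),(0,1,1),(1,0,1),(1,1,1)\}$) on distinct variables; constraints are always understood as restricted to the current domains. $x=d$ means $x\in\{d\}$. A CSP is failed if some domain is empty. A constraint is solved if it equals the product of the domains of its variables; $\phi$ is a reformulation of $\psi$ if removing solved constraints from both yields the same CSP. A Boolean CSP is limited if it contains no constraint $x\wedge y=z$ whose variables have domains $x=1, y\in\{0,1\}, z\in\{0,1\}$ or $x\in\{0,1\}, y=1, z\in\{0,1\}$, and no constraint $x\vee y=z$ whose variables have domains $x=0, y\in\{0,1\}, z\in\{0,1\}$ or $x\in\{0,1\}, y=0, z\in\{0,1\}$. The proof system BOOL' consists of the rules (constraint, premise $\rightarrow$ conclusion; $x,y,z$ schematic): EQU1: $x=y$, $x=1\rightarrow y=1$; EQU2: $x=y$, $y=1\rightarrow x=1$; EQU3: $x=y$, $x=0\rightarrow y=0$; EQU4: $x=y$, $y=0\rightarrow x=0$; NOT1: $\neg x=y$, $x=1\rightarrow y=0$; NOT2: $\neg x=y$, $x=0\rightarrow y=1$; NOT3: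 $\neg x=y$, $y=1\rightarrow x=0$; NOT4: $\neg x=y$, $y=0\rightarrow x=1$; AND1': $x\wedge y=z$, $x=1\rightarrow$ constraint $y=z$; AND2': $x\wedge y=z$, $y=1\rightarrow$ constraint $x=z$; AND3': $x\wedge y=z$, $z=1\rightarrow x=1$; AND4: $x\wedge y=z$, $x=0\rightarrow z=0$; AND5: $x\wedge y=z$, $y=0\rightarrow z=0$; AND6': $x\wedge y=z$, $z=1\rightarrow y=1$; OR1: $x\vee y=z$, $x=1\rightarrow z=1$; OR2': $x\vee y=z$, $x=0\rightarrow$ constraint $y=z$; OR3': $x\vee y=z$, $y=0\rightarrow$ constraint $x=z$; OR4': $x\vee y=z$, $z=0\rightarrow x=0$; OR5: $x\vee y=z$, $y=1\rightarrow z=1$; OR6': $x\vee y=z$, $z=0\rightarrow y=0$. On CSPs: a rule with constraint $c$ and premise $X=s$ is applicable to a CSP containing (an instance of) $c$ in which each variable of $X$ has domain exactly $\{s_i\}$. If the conclusion is $Y=t$, the result removes $c$ and replaces the domain $D$ of each $y_j\in Y$ by $D\cap\{t_j\}$; if the conclusion is a constraint, the result replaces $c$ by that equality constraint (on the corresponding variables) and leaves domains unchanged. An application is relevant if its result is not a reformulation of the original CSP. A CSP is closed under the applications of a rule $R$ if $R$ cannot be applied or no application of it is relevant. A constraint is hyper-arc consistent if for every variable of it each value in its domain participates in a solution to the constraint (restricted to current domains); a CSP is hyper-arc consistent if every constraint of it is. *)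

theory Defs
  imports Main
begin

datatype 'v constr =
    CEq 'v 'v
  | CNot 'v 'v
  | CAnd 'v 'v 'v
  | COr 'v 'v 'v

fun cvars :: "'v constr \<Rightarrow> 'v set" where
  "cvars (CEq u v) = {u, v}"
| "cvars (CNot u v) = {u, v}"
| "cvars (CAnd u v w) = {u, v, w}"
| "cvars (COr u v w) = {u, v, w}"

fun wf_constr :: "'v constr \<Rightarrow> bool" where
  "wf_constr (CEq u v) = (u \<noteq> v)"
| "wf_constr (CNot u v) = (u \<noteq> v)"
| "wf_constr (CAnd u v w) = distinct [u, v, w]"
| "wf_constr (COr u v w) = distinct [u, v, w]"

fun sat :: "'v constr \<Rightarrow> ('v \<Rightarrow> bool) \<Rightarrow> bool" where
  "sat (CEq u v) a = (a u = a v)"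
| "sat (CNot u v) a = ((\<not> a u) = a v)"
| "sat (CAnd u v w) a = ((a u \<and> a v) = a w)"
| "sat (COr u v w) a = ((a u \<or> a v) = a w)"

text \<open>A CSP: a finite set of variables, a finite set of constraints, and domains
  (subsets of {0,1}, here of type bool set, False = 0, True = 1).\<close>
record 'v csp =
  vars :: "'v set"
  cons :: "'v constr set"
  doms :: "'v \<Rightarrow> bool set"

definition wf_csp :: "'v csp \<Rightarrow> bool" where
  "wf_csp P \<longleftrightarrow> finite (vars P) \<and> finite (cons P) \<and>
     (\<forall>c\<in>cons P. wf_constr c \<and> cvars c \<subseteq> vars P)"

definition failed :: "'v csp \<Rightarrow> bool" where
  "failed P \<longleftrightarrow> (\<exists>x\<in>vars P. doms P x = {})"

definition in_doms :: "('v \<Rightarrow> bool set) \<Rightarrow> 'v constr \<Rightarrow> ('v \<Rightarrow> bool) \<Rightarrow> bool" where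
  "in_doms D c a \<longleftrightarrow> (\<forall>x\<in>cvars c. a x \<in> D x)"

text \<open>A constraint is solved if (restricted to the domains) it equals the product of the domains.\<close>
definition solved :: "('v \<Rightarrow> bool set) \<Rightarrow> 'v constr \<Rightarrow> bool" where
  "solved D c \<longleftrightarrow> (\<forall>a. in_doms D c a \<longrightarrow> sat c a)"

definition unsolved_cons :: "'v csp \<Rightarrow> 'v constr set" where
  "unsolved_cons P = {c \<in> cons P. \<not> solved (doms P) c}"

definition reformulation :: "'v csp \<Rightarrow> 'v csp \<Rightarrow> bool" where
  "reformulation \<phi> \<psi> \<longleftrightarrow> vars \<phi> = vars \<psi> \<and> unsolved_cons \<phi> = unsolved_cons \<psi> \<and>
     (\<forall>x\<in>vars \<psi>. doms \<phi> x = doms \<psi> x)"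

definition hac_constr :: "('v \<Rightarrow> bool set) \<Rightarrow> 'v constr \<Rightarrow> bool" where
  "hac_constr D c \<longleftrightarrow>
     (\<forall>x\<in>cvars c. \<forall>d\<in>D x. \<exists>a. a x = d \<and> in_doms D c a \<and> sat c a)"

definition hac :: "'v csp \<Rightarrow> bool" where
  "hac P \<longleftrightarrow> (\<forall>c\<in>cons P. hac_constr (doms P) c)"

definition limited :: "'v csp \<Rightarrow> bool" where
  "limited P \<longleftrightarrow>
     (\<forall>x y z. CAnd x y z \<in> cons P \<longrightarrow>
        \<not> (doms P x = {True} \<and> doms P y = UNIV \<and> doms P z = UNIV) \<and>
        \<not> (doms P x = UNIV \<and> doms P y = {True} \<and> doms P z = UNIV)) \<and>
     (\<forall>x y z. COr x y z \<in> cons P \<longrightarrow>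
        \<not> (doms P x = {False} \<and> doms P y = UNIV \<and> doms P z = UNIV) \<and>
        \<not> (doms P x = UNIV \<and> doms P y = {False} \<and> doms P z = UNIV))"

datatype rule =
    EQU1 | EQU2 | EQU3 | EQU4
  | NOT1 | NOT2 | NOT3 | NOT4
  | AND1' | AND2' | AND3' | AND4 | AND5 | AND6'
  | OR1 | OR2' | OR3' | OR4' | OR5 | OR6'

datatype 'v concl = CDom 'v bool | CNewEq 'v 'v

text \<open>Instance of a rule on a constraint: premise (variable, value) and conclusion;
  None if the constraint is not of the rule's form.\<close>
fun rule_inst :: "rule \<Rightarrow> 'v constr \<Rightarrow> (('v \<times> bool) \<times> 'v concl) option" where
  "rule_inst EQU1 (CEq x y) = Some ((x, True), CDom y True)"
| "rule_inst EQU2 (CEq x y) = Some ((y, True), CDom x True)"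
| "rule_inst EQU3 (CEq x y) = Some ((x, False), CDom y False)"
| "rule_inst EQU4 (CEq x y) = Some ((y, False), CDom x False)"
| "rule_inst NOT1 (CNot x y) = Some ((x, True), CDom y False)"
| "rule_inst NOT2 (CNot x y) = Some ((x, False), CDom y True)"
| "rule_inst NOT3 (CNot x y) = Some ((y, True), CDom x False)"
| "rule_inst NOT4 (CNot x y) = Some ((y, False), CDom x True)"
| "rule_inst AND1' (CAnd x y z) = Some ((x, True), CNewEq y z)"
| "rule_inst AND2' (CAnd x y z) = Some ((y, True), CNewEq x z)"
| "rule_inst AND3' (CAnd x y z) = Some ((z, True), CDom x True)"
| "rule_inst AND4 (CAnd x y z) = Some ((x, False), CDom z False)"
| "rule_inst AND5 (CAnd x y z) = Some ((y, False), CDom z False)"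
| "rule_inst AND6' (CAnd x y z) = Some ((z, True), CDom y True)"
| "rule_inst OR1 (COr x y z) = Some ((x, True), CDom z True)"
| "rule_inst OR2' (COr x y z) = Some ((x, False), CNewEq y z)"
| "rule_inst OR3' (COr x y z) = Some ((y, False), CNewEq x z)"
| "rule_inst OR4' (COr x y z) = Some ((z, False), CDom x False)"
| "rule_inst OR5 (COr x y z) = Some ((y, True), CDom z True)"
| "rule_inst OR6' (COr x y z) = Some ((z, False), CDom y False)"
| "rule_inst _ _ = None"

definition applicable :: "rule \<Rightarrow> 'v constr \<Rightarrow> 'v csp \<Rightarrow> bool" where
  "applicable R c P \<longleftrightarrow> c \<in> cons P \<and>
     (\<exists>x s k. rule_inst R c = Some ((x, s), k) \<and> doms P x = {s})"

definition apply_rule :: "rule \<Rightarrow> 'v constr \<Rightarrow> 'v csp \<Rightarrow> 'v csp" where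
  "apply_rule R c P =
     (case rule_inst R c of
        Some (_, CDom y t) \<Rightarrow>
          P\<lparr>cons := cons P - {c}, doms := (doms P)(y := doms P y \<inter> {t})\<rparr>
      | Some (_, CNewEq y z) \<Rightarrow> P\<lparr>cons := insert (CEq y z) (cons P - {c})\<rparr>
      | None \<Rightarrow> P)"

definition relevant :: "rule \<Rightarrow> 'v constr \<Rightarrow> 'v csp \<Rightarrow> bool" where
  "relevant R c P \<longleftrightarrow> \<not> reformulation (apply_rule R c P) P"

definition closed_under :: "rule \<Rightarrow> 'v csp \<Rightarrow> bool" where
  "closed_under R P \<longleftrightarrow> (\<forall>c. applicable R c P \<longrightarrow> \<not> relevant R c P)"

end

theory Submission
  imports Defs
begin


lemma and_solved:
  assumes "distinct [u,v,w]"
  shows "solved D (CAnd u v w) \<longleftrightarrow> (\<forall>p\<in>D u. \<forall>q\<in>D v. \<forall>r\<in>D w. (p \<and> q) = r)"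
proof
  assume "solved D (CAnd u v w)"
  then show "\<forall>p\<in>D u. \<forall>q\<in>D v. \<forall>r\<in>D w. (p \<and> q) = r"
    using assms unfolding solved_def in_doms_def
    apply clarify
    subgoal for p q r
      by (drule spec[of _ "\<lambda>x. if x = u then p else if x = v then q else r"]) auto
    done
qed (auto simp: solved_def in_doms_def)

lemma or_solved:
  assumes "distinct [u,v,w]"
  shows "solved D (COr u v w) \<longleftrightarrow> (\<forall>p\<in>D u. \<forall>q\<in>D v. \<forall>r\<in>D w. (p \<or> q) = r)"
proof
  assume "solved D (COr u v w)"
  then show "\<forall>p\<in>D u. \<forall>q\<in>D v. \<forall>r\<in>D w. (p \<or> q) = r"
    using assms unfolding solved_def in_doms_def
    apply clarify
    subgoal for p q r
      by (drule spec[of _ "\<lambda>x. if x = u then p else if x = v then q else r"]) auto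
    done
qed (auto simp: solved_def in_doms_def)

lemma eq_solved:
  assumes "u \<noteq> v"
  shows "solved D (CEq u v) \<longleftrightarrow> (\<forall>p\<in>D u. \<forall>q\<in>D v. p = q)"
proof
  assume "solved D (CEq u v)"
  then show "\<forall>p\<in>D u. \<forall>q\<in>D v. p = q"
    using assms unfolding solved_def in_doms_def
    apply clarify
    subgoal for p q
      by (drule spec[of _ "\<lambda>x. if x = u then p else q"]) auto
    done
qed (auto simp: solved_def in_doms_def)

lemma not_solved:
  assumes "u \<noteq> v"
  shows "solved D (CNot u v) \<longleftrightarrow> (\<forall>p\<in>D u. \<forall>q\<in>D v. (\<not>p) = q)"
proof
  assume "solved D (CNot u v)"
  then show "\<forall>p\<in>D u. \<forall>q\<in>D v. (\<not>p) = q"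
    using assms unfolding solved_def in_doms_def
    apply clarify
    subgoal for p q
      by (drule spec[of _ "\<lambda>x. if x = u then p else q"]) auto
    done
qed (auto simp: solved_def in_doms_def)



lemma hac_ex:
  assumes "hac_constr D c" "x \<in> cvars c" "d \<in> D x"
  shows "\<exists>a. a x = d \<and> (\<forall>y\<in>cvars c. a y \<in> D y) \<and> sat c a"
  using assms unfolding hac_constr_def in_doms_def by blast

lemma and_hac_0:
  assumes "hac_constr D (CAnd u v w)"
  shows "(\<forall>p\<in>D u. \<exists>q\<in>D v. \<exists>r\<in>D w. (p \<and> q) = r)"
  proof
    fix p assume h: "p \<in> D u"
    obtain a where a: "a u = p" "\<forall>y\<in>cvars (CAnd u v w). a y \<in> D y" "sat (CAnd u v w) a"
      using hac_ex[OF assms, of u p] h by auto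
    show "\<exists>q\<in>D v. \<exists>r\<in>D w. (p \<and> q) = r" using a by - (rule bexI[of _ "a v"], rule bexI[of _ "a w"], auto)
  qed

lemma and_hac_1:
  assumes "hac_constr D (CAnd u v w)"
  shows "(\<forall>q\<in>D v. \<exists>p\<in>D u. \<exists>r\<in>D w. (p \<and> q) = r)"
  proof
    fix q assume h: "q \<in> D v"
    obtain a where a: "a v = q" "\<forall>y\<in>cvars (CAnd u v w). a y \<in> D y" "sat (CAnd u v w) a"
      using hac_ex[OF assms, of v q] h by auto
    show "\<exists>p\<in>D u. \<exists>r\<in>D w. (p \<and> q) = r" using a by - (rule bexI[of _ "a u"], rule bexI[of _ "a w"], auto)
  qed

lemma and_hac_2:
  assumes "hac_constr D (CAnd u v w)"
  shows "(\<forall>r\<in>D w. \<exists>p\<in>D u. \<exists>q\<in>D v. (p \<and> q) = r)"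
  proof
    fix r assume h: "r \<in> D w"
    obtain a where a: "a w = r" "\<forall>y\<in>cvars (CAnd u v w). a y \<in> D y" "sat (CAnd u v w) a"
      using hac_ex[OF assms, of w r] h by auto
    show "\<exists>p\<in>D u. \<exists>q\<in>D v. (p \<and> q) = r" using a by - (rule bexI[of _ "a u"], rule bexI[of _ "a v"], auto)
  qed

lemmas and_hac = and_hac_0 and_hac_1 and_hac_2

lemma or_hac_0:
  assumes "hac_constr D (COr u v w)"
  shows "(\<forall>p\<in>D u. \<exists>q\<in>D v. \<exists>r\<in>D w. (p \<or> q) = r)"
  proof
    fix p assume h: "p \<in> D u"
    obtain a where a: "a u = p" "\<forall>y\<in>cvars (COr u v w). a y \<in> D y" "sat (COr u v w) a"
      using hac_ex[OF assms, of u p] h by auto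
    show "\<exists>q\<in>D v. \<exists>r\<in>D w. (p \<or> q) = r" using a by - (rule bexI[of _ "a v"], rule bexI[of _ "a w"], auto)
  qed

lemma or_hac_1:
  assumes "hac_constr D (COr u v w)"
  shows "(\<forall>q\<in>D v. \<exists>p\<in>D u. \<exists>r\<in>D w. (p \<or> q) = r)"
  proof
    fix q assume h: "q \<in> D v"
    obtain a where a: "a v = q" "\<forall>y\<in>cvars (COr u v w). a y \<in> D y" "sat (COr u v w) a"
      using hac_ex[OF assms, of v q] h by auto
    show "\<exists>p\<in>D u. \<exists>r\<in>D w. (p \<or> q) = r" using a by - (rule bexI[of _ "a u"], rule bexI[of _ "a w"], auto)
  qed

lemma or_hac_2:
  assumes "hac_constr D (COr u v w)"
  shows "(\<forall>r\<in>D w. \<exists>p\<in>D u. \<exists>q\<in>D v. (p \<or> q) = r)"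
  proof
    fix r assume h: "r \<in> D w"
    obtain a where a: "a w = r" "\<forall>y\<in>cvars (COr u v w). a y \<in> D y" "sat (COr u v w) a"
      using hac_ex[OF assms, of w r] h by auto
    show "\<exists>p\<in>D u. \<exists>q\<in>D v. (p \<or> q) = r" using a by - (rule bexI[of _ "a u"], rule bexI[of _ "a v"], auto)
  qed

lemmas or_hac = or_hac_0 or_hac_1 or_hac_2

lemma eq_hac_0:
  assumes "hac_constr D (CEq u v)"
  shows "(\<forall>p\<in>D u. \<exists>q\<in>D v. p = q)"
  proof
    fix p assume h: "p \<in> D u"
    obtain a where a: "a u = p" "\<forall>y\<in>cvars (CEq u v). a y \<in> D y" "sat (CEq u v) a"
      using hac_ex[OF assms, of u p] h by auto
    show "\<exists>q\<in>D v. p = q" using a by - (rule bexI[of _ "a v"], auto)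
  qed

lemma eq_hac_1:
  assumes "hac_constr D (CEq u v)"
  shows "(\<forall>q\<in>D v. \<exists>p\<in>D u. p = q)"
  proof
    fix q assume h: "q \<in> D v"
    obtain a where a: "a v = q" "\<forall>y\<in>cvars (CEq u v). a y \<in> D y" "sat (CEq u v) a"
      using hac_ex[OF assms, of v q] h by auto
    show "\<exists>p\<in>D u. p = q" using a by - (rule bexI[of _ "a u"], auto)
  qed

lemmas eq_hac = eq_hac_0 eq_hac_1

lemma not_hac_0:
  assumes "hac_constr D (CNot u v)"
  shows "(\<forall>p\<in>D u. \<exists>q\<in>D v. (\<not>p) = q)"
  proof
    fix p assume h: "p \<in> D u"
    obtain a where a: "a u = p" "\<forall>y\<in>cvars (CNot u v). a y \<in> D y" "sat (CNot u v) a"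
      using hac_ex[OF assms, of u p] h by auto
    show "\<exists>q\<in>D v. (\<not>p) = q" using a by - (rule bexI[of _ "a v"], auto)
  qed

lemma not_hac_1:
  assumes "hac_constr D (CNot u v)"
  shows "(\<forall>q\<in>D v. \<exists>p\<in>D u. (\<not>p) = q)"
  proof
    fix q assume h: "q \<in> D v"
    obtain a where a: "a v = q" "\<forall>y\<in>cvars (CNot u v). a y \<in> D y" "sat (CNot u v) a"
      using hac_ex[OF assms, of v q] h by auto
    show "\<exists>p\<in>D u. (\<not>p) = q" using a by - (rule bexI[of _ "a u"], auto)
  qed

lemmas not_hac = not_hac_0 not_hac_1


lemma ball_bool2: "(\<forall>p\<in>(A::bool set). Q p) = ((True\<in>A \<longrightarrow> Q True) \<and> (False\<in>A \<longrightarrow> Q False))"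
  by (auto simp: Ball_def all_bool_eq)
lemma bex_bool2: "(\<exists>p\<in>(A::bool set). Q p) = ((True\<in>A \<and> Q True) \<or> (False\<in>A \<and> Q False))"
  by (auto simp: Bex_def ex_bool_eq)
lemma single_bool: "((A::bool set) = {s}) = (s \<in> A \<and> \<not> (\<not>s) \<in> A)"
  by (cases s) (auto simp: set_eq_iff all_bool_eq)
lemma univ_bool: "((A::bool set) = UNIV) = (True \<in> A \<and> False \<in> A)"
  by (auto simp: set_eq_iff all_bool_eq)
lemma empty_bool: "((A::bool set) = {}) = (True \<notin> A \<and> False \<notin> A)"
  by (simp only: set_eq_iff all_bool_eq empty_iff) simp
lemma int_bool: "((A::bool set) \<inter> {t} = A) = (\<forall>p\<in>A. p = t)"
  by auto

lemmas bsimps = ball_bool2 bex_bool2 single_bool univ_bool empty_bool int_bool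

lemma key_eq:
  assumes d: "u \<noteq> v" and h: "hac_constr D (CEq u v)"
    and ne: "D u \<noteq> {}" "D v \<noteq> {}"
    and ri: "rule_inst R (CEq u v) = Some ((x,s),k)" and dx: "D x = {s}"
  shows "solved D (CEq u v) \<and> (case k of CDom y t \<Rightarrow> D y \<inter> {t} = D y
     | CNewEq y z \<Rightarrow> solved D (CEq y z))"
proof -
  note H = eq_hac[OF h] ne
  show ?thesis using ri dx H d
    by (cases R; clarsimp simp add: eq_solved eq_solved bsimps; argo)
qed

lemma key_not:
  assumes d: "u \<noteq> v" and h: "hac_constr D (CNot u v)"
    and ne: "D u \<noteq> {}" "D v \<noteq> {}"
    and ri: "rule_inst R (CNot u v) = Some ((x,s),k)" and dx: "D x = {s}"
  shows "solved D (CNot u v) \<and> (case k of CDom y t \<Rightarrow> D y \<inter> {t} = D y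
     | CNewEq y z \<Rightarrow> solved D (CEq y z))"
proof -
  note H = not_hac[OF h] ne
  show ?thesis using ri dx H d
    by (cases R; clarsimp simp add: not_solved eq_solved bsimps; argo)
qed

lemma key_and:
  assumes d: "distinct [u,v,w]" and h: "hac_constr D (CAnd u v w)"
    and ne: "D u \<noteq> {}" "D v \<noteq> {}" "D w \<noteq> {}"
    and l: "\<not> (D u = {True} \<and> D v = UNIV \<and> D w = UNIV)"
     "\<not> (D u = UNIV \<and> D v = {True} \<and> D w = UNIV)"
    and ri: "rule_inst R (CAnd u v w) = Some ((x,s),k)" and dx: "D x = {s}"
  shows "solved D (CAnd u v w) \<and> (case k of CDom y t \<Rightarrow> D y \<inter> {t} = D y
     | CNewEq y z \<Rightarrow> solved D (CEq y z))"
proof -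
  have e: "v \<noteq> w" "u \<noteq> w" using d by auto
  note H = and_hac[OF h] ne l
  show ?thesis using ri dx H d
    by (cases R; clarsimp simp add: and_solved eq_solved bsimps; argo)
qed

lemma key_or:
  assumes d: "distinct [u,v,w]" and h: "hac_constr D (COr u v w)"
    and ne: "D u \<noteq> {}" "D v \<noteq> {}" "D w \<noteq> {}"
    and l: "\<not> (D u = {False} \<and> D v = UNIV \<and> D w = UNIV)"
     "\<not> (D u = UNIV \<and> D v = {False} \<and> D w = UNIV)"
    and ri: "rule_inst R (COr u v w) = Some ((x,s),k)" and dx: "D x = {s}"
  shows "solved D (COr u v w) \<and> (case k of CDom y t \<Rightarrow> D y \<inter> {t} = D y
     | CNewEq y z \<Rightarrow> solved D (CEq y z))"
proof -
  have e: "v \<noteq> w" "u \<noteq> w" using d by auto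
  note H = or_hac[OF h] ne l
  show ?thesis using ri dx H d
    by (cases R; clarsimp simp add: or_solved eq_solved bsimps; argo)
qed

lemma key:
  assumes "c \<in> cons P" "limited P" "wf_constr c" "hac_constr (doms P) c"
    "\<forall>x\<in>cvars c. doms P x \<noteq> {}"
    "rule_inst R c = Some ((x,s),k)" "doms P x = {s}"
  shows "solved (doms P) c \<and> (case k of CDom y t \<Rightarrow> doms P y \<inter> {t} = doms P y
     | CNewEq y z \<Rightarrow> solved (doms P) (CEq y z))"
proof (cases c)
  case (CEq u v)
  then show ?thesis using assms unfolding CEq by (intro key_eq) auto
next
  case (CNot u v)
  then show ?thesis using assms unfolding CNot by (intro key_not) auto
next
  case (CAnd u v w)
  have l: "\<not> (doms P u = {True} \<and> doms P v = UNIV \<and> doms P w = UNIV)"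
     "\<not> (doms P u = UNIV \<and> doms P v = {True} \<and> doms P w = UNIV)"
    using assms(1,2) CAnd unfolding limited_def by blast+
  show ?thesis using assms l unfolding CAnd by (intro key_and) auto
next
  case (COr u v w)
  have l: "\<not> (doms P u = {False} \<and> doms P v = UNIV \<and> doms P w = UNIV)"
     "\<not> (doms P u = UNIV \<and> doms P v = {False} \<and> doms P w = UNIV)"
    using assms(1,2) COr unfolding limited_def by blast+
  show ?thesis using assms l unfolding COr by (intro key_or) auto
qed


theorem theorem6:
  fixes P :: "'v csp"
  assumes "wf_csp P"
    and "\<not> failed P"
    and "limited P"
    and "hac P"
  shows "\<forall>R. closed_under R P"
proof (intro allI)
  fix R
  show "closed_under R P"
    unfolding closed_under_def
  proof (intro allI impI)
    fix c assume "applicable R c P"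
    then obtain x s k where c: "c \<in> cons P" and ri: "rule_inst R c = Some ((x,s),k)"
      and dx: "doms P x = {s}" unfolding applicable_def by blast
    have wc: "wf_constr c" "cvars c \<subseteq> vars P" using assms(1) c unfolding wf_csp_def by auto
    have hc: "hac_constr (doms P) c" using assms(4) c unfolding hac_def by auto
    have ne: "\<forall>x\<in>cvars c. doms P x \<noteq> {}" using assms(2) wc(2) unfolding failed_def by auto
    note K = key[OF c assms(3) wc(1) hc ne ri dx]
    show "\<not> relevant R c P"
    proof (cases k)
      case (CDom y t)
      then have "apply_rule R c P = P\<lparr>cons := cons P - {c}\<rparr>"
        using K ri unfolding apply_rule_def by simp
      then show ?thesis using K unfolding relevant_def reformulation_def unsolved_cons_def
        by auto
    next
      case (CNewEq y z)
      then have "apply_rule R c P = P\<lparr>cons := insert (CEq y z) (cons P - {c})\<rparr>"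
        using K ri unfolding apply_rule_def by simp
      then show ?thesis using K CNewEq unfolding relevant_def reformulation_def unsolved_cons_def
        by auto
    qed
  qed
qed

end
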